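(* Let $q \ge 2$ and for $i = 1,\dots,q$ let $\Sigma_i \subset \mathbb{R}^{N_i}$ be nonempty; let $\Sigma = \Sigma_1 \times \cdots \times \Sigma_q$, equipped with the norm $\|(x_1,\dots,x_q)\|_2 = \sqrt{\sum_i \|x_i\|_2^2}$. For each $i$ let $P_i$ be a generalized projection onto $\Sigma_i$ minimizing $\beta_{\Sigma_i}$ over all generalized projections onto $\Sigma_i$, with $\beta_{\Sigma_i}(P_i) < \infty$. Define $P_\Sigma(z) = (P_1(z_1),\dots,P_q(z_q))$ (i.e., the set $P_1(z_1)\times\cdots\times P_q(z_q)$). Then $P_\Sigma$ minimizes $\beta_\Sigma$ over all generalized projections onto $\Sigma$.
   Context: A (set-valued) generalized projection onto $\Sigma \subset \mathbb{R}^N$ is a map $P$ assigning to each $z \in \mathbb{R}^N$ a nonempty subset $P(z) \subset \Sigma$. Restricted Lipschitz property: $P$ has the restricted $\beta$-Lipschitz property with respect to $\Sigma$ if for all $z \in \mathbb{R}^N$, all $x \in \Sigma$ and all $u \in P(z)$, $\|u - x\|_2 \le \beta\|z - x\|_2$; $\beta_\Sigma(P)$ denotes the smallest such $\beta$ (possibly $+\infty$). *)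

theory Defs
  imports Main "HOL-Library.Extended_Real"
begin

text \<open>Points of R^n are represented as real lists of length n.
  The ambient space of a set is given as a carrier V with a distance d.\<close>

definition rn :: "nat \<Rightarrow> real list set" where
  "rn n = {xs. length xs = n}"

definition euclid_dist :: "real list \<Rightarrow> real list \<Rightarrow> real" where
  "euclid_dist xs ys = sqrt (\<Sum>j<length xs. (xs ! j - ys ! j)\<^sup>2)"

definition gen_proj :: "'a set \<Rightarrow> 'a set \<Rightarrow> ('a \<Rightarrow> 'a set) \<Rightarrow> bool" where
  "gen_proj V S P \<longleftrightarrow> (\<forall>z\<in>V. P z \<noteq> {} \<and> P z \<subseteq> S)"

definition restricted_lipschitz ::
  "'a set \<Rightarrow> ('a \<Rightarrow> 'a \<Rightarrow> real) \<Rightarrow> 'a set \<Rightarrow> ('a \<Rightarrow> 'a set) \<Rightarrow> real \<Rightarrow> bool" where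
  "restricted_lipschitz V d S P \<beta> \<longleftrightarrow>
     (\<forall>z\<in>V. \<forall>x\<in>S. \<forall>u\<in>P z. d u x \<le> \<beta> * d z x)"

text \<open>Smallest restricted Lipschitz constant (infinity if none exists).\<close>
definition beta_const ::
  "'a set \<Rightarrow> ('a \<Rightarrow> 'a \<Rightarrow> real) \<Rightarrow> 'a set \<Rightarrow> ('a \<Rightarrow> 'a set) \<Rightarrow> ereal" where
  "beta_const V d S P = Inf {ereal \<beta> | \<beta>. restricted_lipschitz V d S P \<beta>}"

text \<open>Product space R^{N_0} x ... x R^{N_(q-1)} as lists of q component vectors.\<close>
definition prod_space :: "nat \<Rightarrow> (nat \<Rightarrow> nat) \<Rightarrow> real list list set" where
  "prod_space q N = {zs. length zs = q \<and> (\<forall>i<q. zs ! i \<in> rn (N i))}"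

definition prod_dist :: "nat \<Rightarrow> real list list \<Rightarrow> real list list \<Rightarrow> real" where
  "prod_dist q xs ys = sqrt (\<Sum>i<q. (euclid_dist (xs ! i) (ys ! i))\<^sup>2)"

definition prod_set :: "nat \<Rightarrow> (nat \<Rightarrow> nat) \<Rightarrow> (nat \<Rightarrow> real list set) \<Rightarrow> real list list set" where
  "prod_set q N S = {xs \<in> prod_space q N. \<forall>i<q. xs ! i \<in> S i}"

definition prod_proj ::
  "nat \<Rightarrow> (nat \<Rightarrow> real list \<Rightarrow> real list set) \<Rightarrow> real list list \<Rightarrow> real list list set" where
  "prod_proj q P zs = {us. length us = q \<and> (\<forall>i<q. us ! i \<in> P i (zs ! i))}"

end

theory Submission
  imports Defs
begin

lemma euclid_dist_nonneg: "0 \<le> euclid_dist x y"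
  unfolding euclid_dist_def by (simp add: sum_nonneg)

lemma euclid_dist_self: "euclid_dist x x = 0"
  unfolding euclid_dist_def by simp

lemma prod_dist_nonneg: "0 \<le> prod_dist q x y"
  unfolding prod_dist_def by (simp add: sum_nonneg)

lemma sqrt_sum_bound:
  fixes a b :: "nat \<Rightarrow> real"
  assumes "\<forall>i<q. 0 \<le> a i \<and> 0 \<le> b i \<and> a i \<le> c * b i"
  shows "sqrt (\<Sum>i<q. (a i)\<^sup>2) \<le> c * sqrt (\<Sum>i<q. (b i)\<^sup>2)"
proof (cases "c \<ge> 0")
  case True
  have "\<forall>i<q. (a i)\<^sup>2 \<le> c\<^sup>2 * (b i)\<^sup>2"
  proof (intro allI impI)
    fix i assume "i < q"
    with assms have "0 \<le> a i" "a i \<le> c * b i" by auto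
    then have "(a i)\<^sup>2 \<le> (c * b i)\<^sup>2" by (intro power_mono) auto
    then show "(a i)\<^sup>2 \<le> c\<^sup>2 * (b i)\<^sup>2" by (simp add: power_mult_distrib)
  qed
  then have "(\<Sum>i<q. (a i)\<^sup>2) \<le> (\<Sum>i<q. c\<^sup>2 * (b i)\<^sup>2)"
    by (intro sum_mono) auto
  also have "\<dots> = c\<^sup>2 * (\<Sum>i<q. (b i)\<^sup>2)" by (simp add: sum_distrib_left)
  finally have "sqrt (\<Sum>i<q. (a i)\<^sup>2) \<le> sqrt (c\<^sup>2 * (\<Sum>i<q. (b i)\<^sup>2))"
    by (rule real_sqrt_le_mono)
  also have "\<dots> = c * sqrt (\<Sum>i<q. (b i)\<^sup>2)" using True by (simp add: real_sqrt_mult)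
  finally show ?thesis .
next
  case False
  have "\<forall>i<q. a i = 0 \<and> b i = 0"
  proof (intro allI impI)
    fix i assume "i < q"
    with assms have h: "0 \<le> a i" "0 \<le> b i" "a i \<le> c * b i" by auto
    have "c * b i \<le> 0" using False h(2) by (simp add: mult_nonpos_nonneg)
    then show "a i = 0 \<and> b i = 0" using h False
      by (smt (verit) mult_neg_pos)
  qed
  then show ?thesis by simp
qed

lemma rl_mono:
  assumes "restricted_lipschitz V d S P b" "b \<le> b'" "\<And>x y. 0 \<le> d x y"
  shows "restricted_lipschitz V d S P b'"
  using assms unfolding restricted_lipschitz_def
  by (meson mult_right_mono order_trans)

lemma beta_lt:
  assumes "beta_const V d S P < ereal c" "\<And>x y. 0 \<le> d x y"
  shows "restricted_lipschitz V d S P c"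
proof -
  from assms(1) obtain b where "restricted_lipschitz V d S P b" "ereal b < ereal c"
    unfolding beta_const_def Inf_less_iff by auto
  then show ?thesis using rl_mono[of V d S P b c, OF _ _ assms(2)] by auto
qed

theorem corollary1:
  fixes q :: nat and N :: "nat \<Rightarrow> nat"
    and S :: "nat \<Rightarrow> real list set"
    and P :: "nat \<Rightarrow> real list \<Rightarrow> real list set"
  assumes "q \<ge> 2"
    and "\<And>i. i < q \<Longrightarrow> S i \<subseteq> rn (N i) \<and> S i \<noteq> {}"
    and "\<And>i. i < q \<Longrightarrow> gen_proj (rn (N i)) (S i) (P i)"
    and "\<And>i P'. i < q \<Longrightarrow> gen_proj (rn (N i)) (S i) P' \<Longrightarrow>
           beta_const (rn (N i)) euclid_dist (S i) (P i)
             \<le> beta_const (rn (N i)) euclid_dist (S i) P'"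
    and "\<And>i. i < q \<Longrightarrow> beta_const (rn (N i)) euclid_dist (S i) (P i) < \<infinity>"
  shows "gen_proj (prod_space q N) (prod_set q N S) (prod_proj q P) \<and>
         (\<forall>P'. gen_proj (prod_space q N) (prod_set q N S) P' \<longrightarrow>
            beta_const (prod_space q N) (prod_dist q) (prod_set q N S) (prod_proj q P)
              \<le> beta_const (prod_space q N) (prod_dist q) (prod_set q N S) P')"
proof (intro conjI allI impI)
  show "gen_proj (prod_space q N) (prod_set q N S) (prod_proj q P)"
    unfolding gen_proj_def
  proof (intro ballI conjI)
    fix z assume z: "z \<in> prod_space q N"
    define us where "us = map (\<lambda>i. SOME u. u \<in> P i (z ! i)) [0..<q]"
    have "\<forall>i<q. us ! i \<in> P i (z ! i)"
    proof (intro allI impI)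
      fix i assume i: "i < q"
      have "z ! i \<in> rn (N i)" using z i unfolding prod_space_def by auto
      then have "P i (z ! i) \<noteq> {}" using assms(3)[OF i] unfolding gen_proj_def by auto
      then show "us ! i \<in> P i (z ! i)" unfolding us_def using i
        by (simp add: some_in_eq)
    qed
    moreover have "length us = q" unfolding us_def by simp
    ultimately show "prod_proj q P z \<noteq> {}" unfolding prod_proj_def by blast
    show "prod_proj q P z \<subseteq> prod_set q N S"
    proof
      fix u assume u: "u \<in> prod_proj q P z"
      have "\<forall>i<q. u ! i \<in> S i"
      proof (intro allI impI)
        fix i assume i: "i < q"
        have "z ! i \<in> rn (N i)" using z i unfolding prod_space_def by auto
        then show "u ! i \<in> S i" using u assms(3)[OF i] i
          unfolding gen_proj_def prod_proj_def by auto
      qed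
      then show "u \<in> prod_set q N S" using u assms(2)
        unfolding prod_set_def prod_space_def prod_proj_def by auto
    qed
  qed
next
  fix P' assume P': "gen_proj (prod_space q N) (prod_set q N S) P'"
  define xbar where "xbar j = (SOME x. x \<in> S j)" for j
  have xbar: "xbar j \<in> S j" if "j < q" for j
    using assms(2)[OF that] unfolding xbar_def by (simp add: some_in_eq)
  define ext where "ext i w = map (\<lambda>j. if j = i then w else xbar j) [0..<q]" for i w
  have ext_nth: "ext i w ! j = (if j = i then w else xbar j)" if "j < q" for i w j
    using that unfolding ext_def by simp
  have ext_len: "length (ext i w) = q" for i w unfolding ext_def by simp
  have ext_space: "ext i w \<in> prod_space q N" if "i < q" "w \<in> rn (N i)" for i w
    using that xbar assms(2) unfolding prod_space_def by (auto simp: ext_len ext_nth)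
  have ext_set: "ext i w \<in> prod_set q N S" if "i < q" "w \<in> S i" for i w
    using that xbar assms(2) unfolding prod_set_def prod_space_def
    by (auto simp: ext_len ext_nth)
  have ext_dist: "prod_dist q (ext i w) (ext i x) = euclid_dist w x" if "i < q" for i w x
  proof -
    have "(\<Sum>j<q. (euclid_dist (ext i w ! j) (ext i x ! j))\<^sup>2)
        = (\<Sum>j<q. if j = i then (euclid_dist w x)\<^sup>2 else 0)"
      by (intro sum.cong) (auto simp: ext_nth euclid_dist_self)
    also have "\<dots> = (euclid_dist w x)\<^sup>2" using that by simp
    finally show ?thesis unfolding prod_dist_def using euclid_dist_nonneg by simp
  qed
  have comp_le: "euclid_dist (u ! i) (x ! i) \<le> prod_dist q u x" if "i < q" for u x i
  proof -
    have "(euclid_dist (u ! i) (x ! i))\<^sup>2 \<le> (\<Sum>j<q. (euclid_dist (u ! j) (x ! j))\<^sup>2)"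
      using that by (intro member_le_sum) auto
    then have "sqrt ((euclid_dist (u ! i) (x ! i))\<^sup>2) \<le> prod_dist q u x"
      unfolding prod_dist_def by (rule real_sqrt_le_mono)
    then show ?thesis using euclid_dist_nonneg by simp
  qed
  show "beta_const (prod_space q N) (prod_dist q) (prod_set q N S) (prod_proj q P)
      \<le> beta_const (prod_space q N) (prod_dist q) (prod_set q N S) P'"
    unfolding beta_const_def[of _ _ _ P']
  proof (rule Inf_greatest, clarify)
    fix b assume b: "restricted_lipschitz (prod_space q N) (prod_dist q) (prod_set q N S) P' b"
    show "beta_const (prod_space q N) (prod_dist q) (prod_set q N S) (prod_proj q P) \<le> ereal b"
    proof (rule ereal_le_epsilon2)
      fix e :: real assume e: "0 < e"
      have rli: "restricted_lipschitz (rn (N i)) euclid_dist (S i) (P i) (b + e)"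
        if i: "i < q" for i
      proof -
        define Q where "Q w = {u ! i | u. u \<in> P' (ext i w)}" for w
        have gQ: "gen_proj (rn (N i)) (S i) Q"
          unfolding gen_proj_def
        proof (intro ballI conjI)
          fix w assume w: "w \<in> rn (N i)"
          have "P' (ext i w) \<noteq> {}" "P' (ext i w) \<subseteq> prod_set q N S"
            using P' ext_space[OF i w] unfolding gen_proj_def by auto
          then show "Q w \<noteq> {}" "Q w \<subseteq> S i"
            unfolding Q_def prod_set_def using i by auto
        qed
        have "restricted_lipschitz (rn (N i)) euclid_dist (S i) Q b"
          unfolding restricted_lipschitz_def
        proof (intro ballI)
          fix w x v assume w: "w \<in> rn (N i)" and x: "x \<in> S i" and v: "v \<in> Q w"
          then obtain u where u: "u \<in> P' (ext i w)" "v = u ! i" unfolding Q_def by auto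
          have "prod_dist q u (ext i x) \<le> b * prod_dist q (ext i w) (ext i x)"
            using b ext_space[OF i w] ext_set[OF i x] u(1)
            unfolding restricted_lipschitz_def by blast
          moreover have "euclid_dist v x \<le> prod_dist q u (ext i x)"
            using comp_le[OF i, of u "ext i x"] u(2) ext_nth[OF i] by simp
          ultimately show "euclid_dist v x \<le> b * euclid_dist w x"
            using ext_dist[OF i] by simp
        qed
        then have "beta_const (rn (N i)) euclid_dist (S i) Q \<le> ereal b"
          unfolding beta_const_def by (intro Inf_lower) auto
        then have "beta_const (rn (N i)) euclid_dist (S i) (P i) < ereal (b + e)"
          using assms(4)[OF i gQ] e by (smt (verit) ereal_less_eq(3) order.trans not_le)
        then show ?thesis using beta_lt euclid_dist_nonneg by blast
      qed
      have "restricted_lipschitz (prod_space q N) (prod_dist q) (prod_set q N S) (prod_proj q P) (b + e)"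
        unfolding restricted_lipschitz_def prod_dist_def
      proof (intro ballI)
        fix z x u assume z: "z \<in> prod_space q N" and x: "x \<in> prod_set q N S"
          and u: "u \<in> prod_proj q P z"
        have "\<forall>i<q. 0 \<le> euclid_dist (u ! i) (x ! i) \<and> 0 \<le> euclid_dist (z ! i) (x ! i) \<and>
            euclid_dist (u ! i) (x ! i) \<le> (b + e) * euclid_dist (z ! i) (x ! i)"
        proof (intro allI impI conjI euclid_dist_nonneg)
          fix i assume i: "i < q"
          have "z ! i \<in> rn (N i)" "x ! i \<in> S i" "u ! i \<in> P i (z ! i)"
            using z x u i unfolding prod_space_def prod_set_def prod_proj_def by auto
          then show "euclid_dist (u ! i) (x ! i) \<le> (b + e) * euclid_dist (z ! i) (x ! i)"
            using rli[OF i] unfolding restricted_lipschitz_def by blast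
        qed
        then show "sqrt (\<Sum>i<q. (euclid_dist (u ! i) (x ! i))\<^sup>2)
            \<le> (b + e) * sqrt (\<Sum>i<q. (euclid_dist (z ! i) (x ! i))\<^sup>2)"
          by (rule sqrt_sum_bound)
      qed
      then have "beta_const (prod_space q N) (prod_dist q) (prod_set q N S) (prod_proj q P) \<le> ereal (b + e)"
        unfolding beta_const_def by (intro Inf_lower) auto
      then show "beta_const (prod_space q N) (prod_dist q) (prod_set q N S) (prod_proj q P) \<le> ereal b + ereal e"
        by simp
    qed
  qed
qed

end
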